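(* In the setting described in the context, let $(x_1,L_1),(x_2,L_2),(x_3,L_3)\in\mathcal E_\varphi$ with $x_1,x_2,x_3$ pairwise distinct and $L_1,L_2,L_3$ pairwise transverse. Then $\beta_n(L_1,L_2,L_3)=n\beta_1(x_1,x_2,x_3)$.
   Context: $V$ real symplectic of dimension $2n$, $\mathcal L(V)$ its Lagrangian Grassmannian, $\Gamma<\mathrm{PU}(1,1)$ a torsion-free cocompact lattice acting on $\mathbb S^1=\partial\mathcal D_{1,1}$, $\rho:\Gamma\to\mathrm{Sp}(V)$ a homomorphism, and $\varphi:\mathbb S^1\to\mathcal L(V)$ a $\rho$-equivariant measurable map such that (i) $\beta_n(\varphi(x),\varphi(y),\varphi(z))=n\beta_1(x,y,z)$ for Lebesgue-a.e. $(x,y,z)$, and (ii) for every $L\in\mathcal L(V)$ the set of $x$ with $\varphi(x)\cap L\neq0$ has Lebesgue measure zero. Here $\beta_n(L_1,L_2,L_3)$ is the signature of $(x_1,x_2,x_3)\mapsto\langle x_1,x_2\rangle+\langle x_2,x_3\rangle+\langle x_3,x_1\rangle$ on $L_1\oplus L_2\oplus L_3$, and $\beta_1(x,y,z)=\pm1$ for pairwise distinct positively/negatively cyclically ordered triples in $\mathbb S^1$, $0$ otherwise. The essential graph $\mathcal E_\varphi\subset\mathbb S^1\times\mathcal L(V)$ is the support of the pushforward of Lebesgue measure under $x\mapsto(x,\varphi(x))$. *)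

theory Defs
  imports "HOL-Analysis.Analysis"
begin

type_synonym 'n sympl = "(real^'n) \<times> (real^'n)"

definition omega :: "'n::finite sympl \<Rightarrow> 'n sympl \<Rightarrow> real" where
  "omega u v = fst u \<bullet> snd v - snd u \<bullet> fst v"

definition lagrangians :: "'n::finite sympl set set" where
  "lagrangians = {L. subspace L \<and> dim L = CARD('n) \<and> (\<forall>u\<in>L. \<forall>v\<in>L. omega u v = 0)}"

definition transverse :: "'n::finite sympl set \<Rightarrow> 'n sympl set \<Rightarrow> bool" where
  "transverse L M \<longleftrightarrow> L \<inter> M = {0}"

text \<open>Gap (Hausdorff distance of unit balls) metric inducing the usual topology
  of the Grassmannian.\<close>
definition gdist :: "'n::finite sympl set \<Rightarrow> 'n sympl set \<Rightarrow> real" where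
  "gdist L M = max (SUP u\<in>L \<inter> cball 0 1. infdist u M) (SUP v\<in>M \<inter> cball 0 1. infdist v L)"

definition pos_index :: "('a::euclidean_space \<Rightarrow> real) \<Rightarrow> 'a set \<Rightarrow> nat" where
  "pos_index Q W = Max {dim U | U. subspace U \<and> U \<subseteq> W \<and> (\<forall>u\<in>U. u \<noteq> 0 \<longrightarrow> Q u > 0)}"

definition signature :: "('a::euclidean_space \<Rightarrow> real) \<Rightarrow> 'a set \<Rightarrow> int" where
  "signature Q W = int (pos_index Q W) - int (pos_index (\<lambda>u. - Q u) W)"

definition beta_n :: "'n::finite sympl set \<Rightarrow> 'n sympl set \<Rightarrow> 'n sympl set \<Rightarrow> int" where
  "beta_n L1 L2 L3 =
     signature (\<lambda>(x1, x2, x3). omega x1 x2 + omega x2 x3 + omega x3 x1) (L1 \<times> L2 \<times> L3)"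

definition circle :: "complex set" where
  "circle = {z. cmod z = 1}"

definition pos_cyclic :: "complex \<Rightarrow> complex \<Rightarrow> complex \<Rightarrow> bool" where
  "pos_cyclic x y z \<longleftrightarrow> (\<exists>a b c. x = cis a \<and> y = cis b \<and> z = cis c \<and> a < b \<and> b < c \<and> c < a + 2 * pi)"

definition beta_1 :: "complex \<Rightarrow> complex \<Rightarrow> complex \<Rightarrow> int" where
  "beta_1 x y z = (if pos_cyclic x y z then 1 else if pos_cyclic x z y then -1 else 0)"

text \<open>The element of PU(1,1) given by (a,b) with |a|^2-|b|^2=1, as a map on the
  closed disc (extended by the identity outside, so that composition is exact).\<close>
definition mob :: "complex \<Rightarrow> complex \<Rightarrow> complex \<Rightarrow> complex" where
  "mob a b z = (if cmod z \<le> 1 then (a * z + b) / (cnj b * z + cnj a) else z)"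

definition SU11 :: "(complex \<times> complex) set" where
  "SU11 = {(a, b). (cmod a)\<^sup>2 - (cmod b)\<^sup>2 = 1}"

definition PU11 :: "(complex \<Rightarrow> complex) set" where
  "PU11 = {mob a b | a b. (a, b) \<in> SU11}"

definition torsion_free_cocompact_lattice :: "(complex \<Rightarrow> complex) set \<Rightarrow> bool" where
  "torsion_free_cocompact_lattice \<Gamma> \<longleftrightarrow>
     \<Gamma> \<subseteq> PU11 \<and> id \<in> \<Gamma> \<and> (\<forall>g\<in>\<Gamma>. \<forall>h\<in>\<Gamma>. g \<circ> h \<in> \<Gamma>) \<and> (\<forall>g\<in>\<Gamma>. inv g \<in> \<Gamma>)
     \<comment> \<open>discrete: the identity is isolated (topology of PU(1,1) = quotient of SU(1,1))\<close>
     \<and> (\<exists>e>0. \<forall>(a, b)\<in>SU11. mob a b \<in> \<Gamma> \<and> mob a b \<noteq> id \<longrightarrow>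
            dist (a, b) (1, 0) \<ge> e \<and> dist (a, b) (-1, 0) \<ge> e)
     \<comment> \<open>cocompact: PU(1,1) = Gamma C with C compact\<close>
     \<and> (\<exists>S. compact S \<and> S \<subseteq> SU11 \<and> (\<forall>g\<in>PU11. \<exists>\<gamma>\<in>\<Gamma>. \<exists>(a, b)\<in>S. g = \<gamma> \<circ> mob a b))
     \<comment> \<open>torsion-free\<close>
     \<and> (\<forall>g\<in>\<Gamma>. \<forall>k::nat. k > 0 \<and> (g ^^ k) = id \<longrightarrow> g = id)"

definition symplectic :: "('n::finite sympl \<Rightarrow> 'n sympl) \<Rightarrow> bool" where
  "symplectic g \<longleftrightarrow> linear g \<and> bij g \<and> (\<forall>u v. omega (g u) (g v) = omega u v)"

definition is_hom :: "(complex \<Rightarrow> complex) set \<Rightarrow> ((complex \<Rightarrow> complex) \<Rightarrow> ('n::finite sympl \<Rightarrow> 'n sympl)) \<Rightarrow> bool" where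
  "is_hom \<Gamma> \<rho> \<longleftrightarrow> (\<forall>g\<in>\<Gamma>. symplectic (\<rho> g)) \<and> (\<forall>g\<in>\<Gamma>. \<forall>h\<in>\<Gamma>. \<rho> (g \<circ> h) = \<rho> g \<circ> \<rho> h)"

text \<open>Lebesgue measure on the circle is the image of Lebesgue measure on [0,2pi)
  under t \<mapsto> cis t.  Measurability w.r.t. the Borel structure of the Grassmannian
  (generated by the open gdist-balls, the Grassmannian being separable).\<close>
definition lag_measurable :: "(complex \<Rightarrow> 'n::finite sympl set) \<Rightarrow> bool" where
  "lag_measurable \<phi> \<longleftrightarrow>
     (\<forall>L\<in>lagrangians. \<forall>r. {t. gdist (\<phi> (cis t)) L < r} \<in> sets lebesgue)"

definition essential_graph :: "(complex \<Rightarrow> 'n::finite sympl set) \<Rightarrow> (complex \<times> 'n sympl set) set" where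
  "essential_graph \<phi> = {(x, L). x \<in> circle \<and> L \<in> lagrangians \<and>
      (\<forall>r>0. emeasure lebesgue {t \<in> {0..<2*pi}. dist (cis t) x < r \<and> gdist (\<phi> (cis t)) L < r} > 0)}"

end

theory Submission
  imports Defs
begin


lemma pos_set_finite:
  fixes Q :: "'a::euclidean_space \<Rightarrow> real"
  shows "finite {dim U | U. subspace U \<and> U \<subseteq> W \<and> (\<forall>u\<in>U. u \<noteq> 0 \<longrightarrow> Q u > (0::real))}"
proof -
  have "{dim U | U. subspace U \<and> U \<subseteq> W \<and> (\<forall>u\<in>U. u \<noteq> 0 \<longrightarrow> Q u > 0)} \<subseteq> {..dim W}"
    by (auto intro: dim_subset)
  then show ?thesis by (rule finite_subset[OF _ finite_atMost])
qed

lemma pos_index_ge: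
  fixes Q :: "'a::euclidean_space \<Rightarrow> real"
  assumes "subspace U" "U \<subseteq> W" "\<forall>u\<in>U. u \<noteq> 0 \<longrightarrow> Q u > 0"
  shows "dim U \<le> pos_index Q W"
  unfolding pos_index_def
  by (rule Max_ge[OF pos_set_finite]) (use assms in blast)

lemma pos_index_obtain:
  fixes Q :: "'a::euclidean_space \<Rightarrow> real"
  assumes "subspace W"
  obtains U where "subspace U" "U \<subseteq> W" "\<forall>u\<in>U. u \<noteq> 0 \<longrightarrow> Q u > 0" "dim U = pos_index Q W"
proof -
  have ne: "{dim U | U. subspace U \<and> U \<subseteq> W \<and> (\<forall>u\<in>U. u \<noteq> 0 \<longrightarrow> Q u > 0)} \<noteq> {}"
  proof -
    have "{0} \<subseteq> W" using subspace_0[OF assms] by blast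
    then have "dim {0::'a} \<in> {dim U | U. subspace U \<and> U \<subseteq> W \<and> (\<forall>u\<in>U. u \<noteq> 0 \<longrightarrow> Q u > 0)}"
      using subspace_single_0 by blast
    then show ?thesis by blast
  qed
  have "pos_index Q W \<in> {dim U | U. subspace U \<and> U \<subseteq> W \<and> (\<forall>u\<in>U. u \<noteq> 0 \<longrightarrow> Q u > 0)}"
    unfolding pos_index_def by (rule Max_in[OF pos_set_finite ne])
  then show ?thesis using that by auto
qed

lemma pos_neg_le:
  fixes Q :: "'a::euclidean_space \<Rightarrow> real"
  assumes W: "subspace W"
  shows "pos_index Q W + pos_index (\<lambda>u. - Q u) W \<le> dim W"
proof -
  obtain U where U: "subspace U" "U \<subseteq> W" "\<forall>u\<in>U. u \<noteq> 0 \<longrightarrow> Q u > 0" "dim U = pos_index Q W"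
    using pos_index_obtain[OF W, of Q] by blast
  obtain N where N: "subspace N" "N \<subseteq> W" "\<forall>u\<in>N. u \<noteq> 0 \<longrightarrow> - Q u > 0" "dim N = pos_index (\<lambda>u. - Q u) W"
    using pos_index_obtain[OF W, of "\<lambda>u. - Q u"] by blast
  have "x = 0" if "x \<in> U" "x \<in> N" for x
  proof (rule ccontr)
    assume "x \<noteq> 0"
    then have "Q x > 0" "- Q x > 0" using that U(3) N(3) by auto
    then show False by linarith
  qed
  then have "U \<inter> N \<subseteq> {0}" by blast
  then have d0: "dim (U \<inter> N) = 0" by simp
  have sub: "{x + y |x y. x \<in> U \<and> y \<in> N} \<subseteq> W"
    using U(2) N(2) subspace_add[OF W] by blast
  have "dim {x + y |x y. x \<in> U \<and> y \<in> N} \<le> dim W" by (rule dim_subset[OF sub])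
  moreover have "dim {x + y |x y. x \<in> U \<and> y \<in> N} + dim (U \<inter> N) = dim U + dim N"
    using dim_sums_Int[OF U(1) N(1)] by simp
  ultimately have "dim U + dim N \<le> dim W" using d0 by linarith
  then show ?thesis unfolding U(4)[symmetric] N(4)[symmetric] .
qed


lemma subspace_kernels:
  fixes g :: "'b \<Rightarrow> 'a::euclidean_space \<Rightarrow> real"
  assumes S: "subspace S" and lin: "\<forall>b\<in>F. linear (g b)"
  shows "subspace {x\<in>S. \<forall>b\<in>F. g b x = 0}"
  unfolding subspace_def
proof (intro conjI ballI allI)
  show "0 \<in> {x \<in> S. \<forall>b\<in>F. g b x = 0}"
    using subspace_0[OF S] lin linear_0 by blast
next
  fix x y assume x: "x \<in> {x \<in> S. \<forall>b\<in>F. g b x = 0}" and y: "y \<in> {x \<in> S. \<forall>b\<in>F. g b x = 0}"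
  have "x + y \<in> S" using x y subspace_add[OF S] by blast
  moreover have "\<forall>b\<in>F. g b (x + y) = 0"
  proof
    fix b assume "b \<in> F"
    then have "g b (x + y) = g b x + g b y" using lin linear_add by blast
    then show "g b (x + y) = 0" using x y \<open>b \<in> F\<close> by simp
  qed
  ultimately show "x + y \<in> {x \<in> S. \<forall>b\<in>F. g b x = 0}" by blast
next
  fix c :: real and x assume x: "x \<in> {x \<in> S. \<forall>b\<in>F. g b x = 0}"
  have "c *\<^sub>R x \<in> S" using x subspace_scale[OF S] by blast
  moreover have "\<forall>b\<in>F. g b (c *\<^sub>R x) = 0"
  proof
    fix b assume "b \<in> F"
    then have "g b (c *\<^sub>R x) = c *\<^sub>R g b x" using lin linear_cmul by blast
    then show "g b (c *\<^sub>R x) = 0" using x \<open>b \<in> F\<close> by simp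
  qed
  ultimately show "c *\<^sub>R x \<in> {x \<in> S. \<forall>b\<in>F. g b x = 0}" by blast
qed

lemma hyper_dim:
  fixes f :: "'a::euclidean_space \<Rightarrow> real"
  assumes S: "subspace S" and lf: "linear f"
  shows "dim S \<le> dim {x\<in>S. f x = 0} + 1"
proof (cases "\<forall>x\<in>S. f x = 0")
  case True
  then have "{x\<in>S. f x = 0} = S" by blast
  then show ?thesis by simp
next
  case False
  then obtain s0 where s0: "s0 \<in> S" "f s0 \<noteq> 0" by blast
  define K where "K = {x\<in>S. f x = 0}"
  have "S \<subseteq> span (insert s0 K)"
  proof
    fix x assume x: "x \<in> S"
    define c where "c = f x / f s0"
    have "f (x - c *\<^sub>R s0) = f x - c * f s0"
      using lf by (simp add: linear_diff linear_cmul)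
    also have "\<dots> = 0" using s0(2) by (simp add: c_def)
    finally have "x - c *\<^sub>R s0 \<in> K"
      unfolding K_def using x s0(1) S by (simp add: subspace_diff subspace_scale)
    then have "x - c *\<^sub>R s0 \<in> span (insert s0 K)"
      by (simp add: span_base)
    moreover have "c *\<^sub>R s0 \<in> span (insert s0 K)"
      by (simp add: span_base span_mul)
    ultimately have "(x - c *\<^sub>R s0) + c *\<^sub>R s0 \<in> span (insert s0 K)"
      by (rule span_add)
    then show "x \<in> span (insert s0 K)" by simp
  qed
  then have "dim S \<le> dim (span (insert s0 K))" by (rule dim_subset)
  also have "\<dots> = dim (insert s0 K)" by simp
  also have "\<dots> \<le> dim K + 1" by (simp add: dim_insert)
  finally show ?thesis unfolding K_def .
qed

lemma multi_hyper_dim: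
  fixes g :: "'b \<Rightarrow> 'a::euclidean_space \<Rightarrow> real"
  assumes fin: "finite F"
  shows "subspace S \<Longrightarrow> (\<forall>b\<in>F. linear (g b)) \<Longrightarrow> dim S \<le> dim {x\<in>S. \<forall>b\<in>F. g b x = 0} + card F"
  using fin
proof (induction F rule: finite_induct)
  case empty
  then show ?case by simp
next
  case (insert a F)
  define S' where "S' = {x\<in>S. \<forall>b\<in>F. g b x = 0}"
  have sS': "subspace S'" unfolding S'_def
    by (rule subspace_kernels) (use insert in auto)
  have IH: "dim S \<le> dim S' + card F" unfolding S'_def
    using insert by auto
  have "dim S' \<le> dim {x\<in>S'. g a x = 0} + 1"
    by (rule hyper_dim[OF sS']) (use insert in auto)
  moreover have "{x\<in>S'. g a x = 0} = {x\<in>S. \<forall>b\<in>insert a F. g b x = 0}"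
    unfolding S'_def by auto
  ultimately have "dim S' \<le> dim {x\<in>S. \<forall>b\<in>insert a F. g b x = 0} + 1" by simp
  moreover have "card (insert a F) = card F + 1" using insert by simp
  ultimately show ?case using IH by linarith
qed


lemma bil_expand:
  fixes B :: "'a::euclidean_space \<Rightarrow> 'a \<Rightarrow> real"
  assumes bil: "bilinear B" and sym: "\<forall>x y. B x y = B y x"
  shows "B (u + k *\<^sub>R w) (u + k *\<^sub>R w) = B u u + 2 * k * B u w + k^2 * B w w"
proof -
  have "B (u + k *\<^sub>R w) (u + k *\<^sub>R w) = B u u + B u (k *\<^sub>R w) + (B (k *\<^sub>R w) u + B (k *\<^sub>R w) (k *\<^sub>R w))"
    by (simp add: bilinear_ladd[OF bil] bilinear_radd[OF bil])
  also have "\<dots> = B u u + k * B u w + (k * B w u + k * (k * B w w))"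
    by (simp add: bilinear_lmul[OF bil] bilinear_rmul[OF bil])
  also have "\<dots> = B u u + 2 * k * B u w + k^2 * B w w"
    using sym by (simp add: power2_eq_square algebra_simps)
  finally show ?thesis .
qed

lemma nondeg_pos_neg:
  fixes B :: "'a::euclidean_space \<Rightarrow> 'a \<Rightarrow> real"
  assumes bil: "bilinear B" and sym: "\<forall>x y. B x y = B y x" and QB: "\<forall>x. Q x = B x x"
    and W: "subspace W"
    and nd: "\<forall>w\<in>W. (\<forall>x\<in>W. B w x = 0) \<longrightarrow> w = 0"
  shows "dim W \<le> pos_index Q W + pos_index (\<lambda>u. - Q u) W"
proof -
  obtain U where U: "subspace U" "U \<subseteq> W" "\<forall>u\<in>U. u \<noteq> 0 \<longrightarrow> Q u > 0" "dim U = pos_index Q W"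
    using pos_index_obtain[OF W, of Q] by blast
  obtain F where F: "F \<subseteq> U" "independent F" "U \<subseteq> span F" "card F = dim U"
    using basis_exists[of U] by blast
  have finF: "finite F" using F(2) by (rule finiteI_independent)
  have spanF: "span F = U"
    using F(1) F(3) U(1) span_minimal[OF F(1) U(1)] by blast
  have linl: "linear (\<lambda>u. B u w)" for w using bil unfolding bilinear_def by blast
  have linr: "linear (\<lambda>w. B u w)" for u using bil unfolding bilinear_def by blast
  define C where "C = {x\<in>W. \<forall>b\<in>F. B b x = 0}"
  have sC: "subspace C" unfolding C_def
    by (rule subspace_kernels[OF W]) (use linr in blast)
  have CW: "C \<subseteq> W" unfolding C_def by blast
  have dimC: "dim W \<le> dim C + dim U"
    unfolding C_def F(4)[symmetric]
    by (rule multi_hyper_dim[OF finF W]) (use linr in blast)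
  have CU: "B u w = 0" if "w \<in> C" "u \<in> U" for u w
  proof -
    have "u \<in> span F" using that(2) spanF by blast
    moreover have "\<forall>b\<in>F. B b w = 0" using that(1) unfolding C_def by blast
    ultimately show ?thesis using linear_eq_0_on_span[OF linl[of w]] by blast
  qed
  have Qexp: "Q (u + k *\<^sub>R w) = Q u + 2 * k * B u w + k^2 * Q w" for u k w
    using QB bil_expand[OF bil sym] by simp
  have Cle: "Q w \<le> 0" if w: "w \<in> C" for w
  proof (rule ccontr)
    assume "\<not> Q w \<le> 0"
    then have Qw: "Q w > 0" by simp
    have wU: "w \<notin> U"
    proof
      assume "w \<in> U"
      then have "B w w = 0" using CU[OF w] by blast
      then show False using Qw QB by simp
    qed
    define U' where "U' = span (insert w U)"
    have "dim U' = dim U + 1"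
    proof -
      have sU: "span U = U" by (rule span_eq_iff[THEN iffD2, OF U(1)])
      have "w \<notin> span U" unfolding sU by (rule wU)
      then show ?thesis unfolding U'_def by (simp add: dim_insert)
    qed
    moreover have "subspace U'" unfolding U'_def by simp
    moreover have "U' \<subseteq> W" unfolding U'_def
      using span_minimal[OF _ W, of "insert w U"] U(2) w CW by blast
    moreover have "\<forall>z\<in>U'. z \<noteq> 0 \<longrightarrow> Q z > 0"
    proof (intro ballI impI)
      fix z assume z: "z \<in> U'" "z \<noteq> 0"
      then obtain k where "z - k *\<^sub>R w \<in> span U" unfolding U'_def span_insert by blast
      then have u: "z - k *\<^sub>R w \<in> U" unfolding span_eq_iff[THEN iffD2, OF U(1)] .
      define u where "u = z - k *\<^sub>R w"
      have zu: "z = u + k *\<^sub>R w" unfolding u_def by simp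
      have "B u w = 0" using CU[OF w] u unfolding u_def by blast
      then have Qz: "Q z = Q u + k^2 * Q w" using Qexp zu by simp
      show "Q z > 0"
      proof (cases "u = 0")
        case True
        then have "k \<noteq> 0" using z(2) zu by auto
        then have "k^2 * Q w > 0" using Qw by simp
        then show ?thesis using Qz True QB bilinear_lzero[OF bil] by simp
      next
        case False
        then have "Q u > 0" using U(3) u unfolding u_def by blast
        moreover have "k^2 * Q w \<ge> 0" using Qw by simp
        ultimately show ?thesis using Qz by linarith
      qed
    qed
    ultimately have "dim U + 1 \<le> pos_index Q W"
      using pos_index_ge[of U' W Q] by simp
    then show False using U(4) by simp
  qed
  have CQ0: "B w v = 0" if w: "w \<in> C" "Q w = 0" and v: "v \<in> C" for w v
  proof -
    define b where "b = B w v"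
    define q where "q = Q v"
    define a where "a = 1 + \<bar>q\<bar>"
    have a0: "a > 0" unfolding a_def by simp
    define s where "s = b / a"
    have "w + s *\<^sub>R v \<in> C" using sC w(1) v by (simp add: subspace_add subspace_scale)
    then have "Q (w + s *\<^sub>R v) \<le> 0" by (rule Cle)
    then have "2 * s * b + s^2 * q \<le> 0" using Qexp[of w s v] w(2) unfolding b_def q_def by simp
    then have "a^2 * (2 * s * b + s^2 * q) \<le> 0"
      by (simp add: mult_nonneg_nonpos)
    moreover have "a^2 * (2 * s * b + s^2 * q) = b^2 * (2 * a + q)"
      unfolding s_def using a0 by (simp add: power2_eq_square field_simps)
    ultimately have "b^2 * (2 * a + q) \<le> 0" by simp
    moreover have "2 * a + q > 0" unfolding a_def by (simp add: abs_if)
    ultimately have "b^2 \<le> 0" by (simp add: mult_le_0_iff)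
    then show ?thesis unfolding b_def by simp
  qed
  have UC: "U \<inter> C \<subseteq> {0}"
  proof
    fix z assume z: "z \<in> U \<inter> C"
    then have "B z z = 0" using CU by blast
    then have "Q z = 0" using QB by simp
    then show "z \<in> {0}" using U(3) z by force
  qed
  define SUC where "SUC = {x + y |x y. x \<in> U \<and> y \<in> C}"
  have "dim SUC + dim (U \<inter> C) = dim U + dim C"
    unfolding SUC_def by (rule dim_sums_Int[OF U(1) sC])
  moreover have "dim (U \<inter> C) = 0" using UC by simp
  ultimately have dSUC: "dim SUC = dim U + dim C" by linarith
  have SUCW: "SUC \<subseteq> W" unfolding SUC_def using U(2) CW subspace_add[OF W] by blast
  have sSUC: "subspace SUC" unfolding SUC_def by (rule subspace_sums[OF U(1) sC])
  have SUCeq: "SUC = W"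
    by (rule subspace_dim_equal[OF sSUC W SUCW]) (use dSUC dimC in linarith)
  have Cneg: "\<forall>w\<in>C. w \<noteq> 0 \<longrightarrow> - Q w > 0"
  proof (intro ballI impI)
    fix w assume w: "w \<in> C" "w \<noteq> 0"
    show "- Q w > 0"
    proof (rule ccontr)
      assume "\<not> - Q w > 0"
      then have Q0: "Q w = 0" using Cle[OF w(1)] by simp
      have "\<forall>x\<in>W. B w x = 0"
      proof
        fix x assume "x \<in> W"
        then obtain u c where uc: "u \<in> U" "c \<in> C" "x = u + c"
          using SUCeq unfolding SUC_def by blast
        have "B w x = B w u + B w c" using uc(3) bilinear_radd[OF bil] by simp
        also have "\<dots> = 0" using CU[OF w(1) uc(1)] CQ0[OF w(1) Q0 uc(2)] sym by simp
        finally show "B w x = 0" .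
      qed
      then have "w = 0" using nd w(1) CW by blast
      then show False using w(2) by simp
    qed
  qed
  have "dim C \<le> pos_index (\<lambda>u. - Q u) W"
    by (rule pos_index_ge[OF sC CW Cneg])
  then show ?thesis using dimC U(4) by linarith
qed


lemma pos_index_lsc:
  fixes B :: "'a::euclidean_space \<Rightarrow> 'a \<Rightarrow> real"
  assumes bil: "bilinear B" and QB: "\<forall>x. Q x = B x x" and W: "subspace W"
  shows "\<exists>\<delta>>0. \<forall>W' T. subspace W' \<longrightarrow> linear T \<longrightarrow> T ` W \<subseteq> W' \<longrightarrow>
            (\<forall>x\<in>W. norm (T x - x) \<le> \<delta> * norm x) \<longrightarrow> pos_index Q W \<le> pos_index Q W'"
proof -
  obtain U where U: "subspace U" "U \<subseteq> W" "\<forall>u\<in>U. u \<noteq> 0 \<longrightarrow> Q u > 0" "dim U = pos_index Q W"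
    using pos_index_obtain[OF W, of Q] by blast
  show ?thesis
  proof (cases "U \<subseteq> {0}")
    case True
    then have "dim U = 0" by simp
    then have "pos_index Q W = 0" using U(4) by linarith
    then show ?thesis by (intro exI[of _ 1]) simp
  next
    case False
    then obtain u0 where u0: "u0 \<in> U" "u0 \<noteq> 0" by blast
    have bb: "bounded_bilinear B" using bil bilinear_conv_bounded_bilinear by blast
    obtain K where K: "K > 0" "\<forall>a b. norm (B a b) \<le> norm a * norm b * K"
      using bounded_bilinear.pos_bounded[OF bb] by blast
    define S where "S = U \<inter> sphere 0 1"
    have cS: "compact S" unfolding S_def
      by (rule closed_Int_compact[OF closed_subspace[OF U(1)] compact_sphere])
    have "u0 /\<^sub>R norm u0 \<in> S" unfolding S_def using u0 subspace_scale[OF U(1)] by simp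
    then have neS: "S \<noteq> {}" by blast
    have contQ: "continuous_on S Q"
    proof -
      have "continuous_on S (\<lambda>x. B x x)"
        by (intro bounded_bilinear.continuous_on[OF bb] continuous_on_id)
      then show ?thesis using QB by simp
    qed
    obtain x0 where x0: "x0 \<in> S" "\<forall>y\<in>S. Q x0 \<le> Q y"
      using continuous_attains_inf[OF cS neS contQ] by blast
    define c where "c = Q x0"
    have c0: "c > 0" unfolding c_def using x0(1) U(3) unfolding S_def by auto
    have Qscale: "Q (a *\<^sub>R v) = a^2 * Q v" for a v
      using QB by (simp add: bilinear_lmul[OF bil] bilinear_rmul[OF bil] power2_eq_square)
    have cbound: "Q u \<ge> c * (norm u)^2" if u: "u \<in> U" for u
    proof (cases "u = 0")
      case True
      then show ?thesis using QB bilinear_lzero[OF bil] by simp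
    next
      case False
      define v where "v = u /\<^sub>R norm u"
      have "v \<in> S" unfolding S_def v_def using u False subspace_scale[OF U(1)] by simp
      then have "c \<le> Q v" unfolding c_def using x0(2) by blast
      moreover have "u = norm u *\<^sub>R v" unfolding v_def using False by simp
      then have "Q u = (norm u)^2 * Q v" using Qscale by metis
      ultimately show ?thesis
        by (metis mult.commute mult_right_mono zero_le_power2)
    qed
    define \<delta> where "\<delta> = min 1 (c / (6 * K))"
    have d0: "\<delta> > 0" unfolding \<delta>_def using c0 K(1) by simp
    have d1: "\<delta> \<le> 1" unfolding \<delta>_def by simp
    have dK: "3 * \<delta> * K \<le> c / 2"
    proof -
      have "\<delta> \<le> c / (6 * K)" unfolding \<delta>_def by simp
      then have "\<delta> * (6 * K) \<le> c" using K(1) by (simp add: field_simps)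
      then show ?thesis by simp
    qed
    show ?thesis
    proof (intro exI[of _ \<delta>] conjI allI impI)
      show "\<delta> > 0" by (rule d0)
      fix W' T
      assume W': "subspace W'" and lT: "linear T" and TW: "T ` W \<subseteq> W'"
        and close: "\<forall>x\<in>W. norm (T x - x) \<le> \<delta> * norm x"
      have Tpos: "Q (T u) \<ge> c / 2 * (norm u)^2" if u: "u \<in> U" for u
      proof -
        define d where "d = T u - u"
        have nd: "norm d \<le> \<delta> * norm u" unfolding d_def using close u U(2) by blast
        have Tu: "T u = u + d" unfolding d_def by simp
        have "Q (T u) = B u u + B u d + B d u + B d d"
          unfolding Tu using QB by (simp add: bilinear_ladd[OF bil] bilinear_radd[OF bil])
        moreover have "\<bar>B u d\<bar> \<le> \<delta> * K * (norm u)^2"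
        proof -
          have "\<bar>B u d\<bar> \<le> norm u * norm d * K" using K(2) by (metis real_norm_def)
          also have "\<dots> \<le> norm u * (\<delta> * norm u) * K"
            using nd K(1) by (simp add: mult_left_mono mult_right_mono)
          finally show ?thesis by (simp add: power2_eq_square algebra_simps)
        qed
        moreover have "\<bar>B d u\<bar> \<le> \<delta> * K * (norm u)^2"
        proof -
          have "\<bar>B d u\<bar> \<le> norm d * norm u * K" using K(2) by (metis real_norm_def)
          also have "\<dots> \<le> (\<delta> * norm u) * norm u * K"
            using nd K(1) by (simp add: mult_left_mono mult_right_mono)
          finally show ?thesis by (simp add: power2_eq_square algebra_simps)
        qed
        moreover have "\<bar>B d d\<bar> \<le> \<delta> * K * (norm u)^2"
        proof -
          have "\<bar>B d d\<bar> \<le> norm d * norm d * K" using K(2) by (metis real_norm_def)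
          also have "\<dots> \<le> (\<delta> * norm u) * (\<delta> * norm u) * K"
          proof -
            have "norm d * norm d \<le> (\<delta> * norm u) * (\<delta> * norm u)"
              by (rule mult_mono[OF nd nd]) (use d0 in auto)
            then show ?thesis using K(1) by (simp add: mult_right_mono)
          qed
          also have "\<dots> = \<delta> * (\<delta> * K * (norm u)^2)" by (simp add: power2_eq_square algebra_simps)
          also have "\<dots> \<le> 1 * (\<delta> * K * (norm u)^2)"
            using d1 d0 K(1) by (intro mult_right_mono) auto
          finally show ?thesis by simp
        qed
        moreover have "B u u \<ge> c * (norm u)^2" using cbound[OF u] QB by simp
        moreover have "3 * \<delta> * K * (norm u)^2 \<le> c / 2 * (norm u)^2"
          using mult_right_mono[OF dK zero_le_power2[of "norm u"]] by simp
        ultimately show ?thesis by linarith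
      qed
      have Tpos': "Q (T u) > 0" if u: "u \<in> U" "u \<noteq> 0" for u
      proof -
        have "c / 2 * (norm u)^2 > 0" using c0 u(2) by simp
        then show ?thesis using Tpos[OF u(1)] by linarith
      qed
      have injT: "inj_on T (span U)"
      proof -
        have sU: "span U = U" by (rule span_eq_iff[THEN iffD2, OF U(1)])
        have "inj_on T U"
        proof (rule inj_onI)
          fix x y assume xy: "x \<in> U" "y \<in> U" "T x = T y"
          have "x - y \<in> U" using xy subspace_diff[OF U(1)] by blast
          moreover have "T (x - y) = 0" using xy(3) lT by (simp add: linear_diff)
          ultimately have "x - y = 0"
            using Tpos' QB bilinear_lzero[OF bil] by fastforce
          then show "x = y" by simp
        qed
        then show ?thesis unfolding sU .
      qed
      have "dim (T ` U) = dim U" by (rule dim_image_eq[OF lT injT])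
      moreover have "subspace (T ` U)" by (rule linear_subspace_image[OF lT U(1)])
      moreover have "T ` U \<subseteq> W'" using TW U(2) by blast
      moreover have "\<forall>z\<in>T ` U. z \<noteq> 0 \<longrightarrow> Q z > 0"
      proof (intro ballI impI)
        fix z assume z: "z \<in> T ` U" "z \<noteq> 0"
        then obtain u where u: "u \<in> U" "z = T u" by blast
        have "u \<noteq> 0" using z(2) u(2) lT linear_0 by blast
        then show "Q z > 0" using Tpos'[OF u(1)] u(2) by simp
      qed
      ultimately show "pos_index Q W \<le> pos_index Q W'"
        using pos_index_ge[of "T ` U" W' Q] U(4) by simp
    qed
  qed
qed

lemma proj_exists:
  fixes S :: "'a::euclidean_space set"
  assumes S: "subspace S"
  obtains P where "linear P" "\<And>x. P x \<in> S" "\<And>x s. s \<in> S \<Longrightarrow> norm (x - P x) \<le> norm (x - s)"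
proof -
  obtain T where T: "0 \<notin> T" "T \<subseteq> span S" "pairwise orthogonal T" "independent T"
    "card T = dim (span S)" "span T = span S"
    using orthogonal_basis_subspace subspace_span by blast
  define P where "P x = (\<Sum>b\<in>T. (b \<bullet> x / (b \<bullet> b)) *\<^sub>R b)" for x
  have sS: "span S = S" by (rule span_eq_iff[THEN iffD2, OF S])
  have lP: "linear P"
    unfolding P_def
    by (intro linearI) (simp_all add: inner_add_right add_divide_distrib scaleR_add_left
        sum.distrib scaleR_sum_right)
  have PS: "P x \<in> S" for x
  proof -
    have "P x \<in> span T" unfolding P_def by (intro span_sum span_mul span_base)
    then show ?thesis using T(6) sS by simp
  qed
  have orth: "orthogonal w (x - P x)" if "w \<in> S" for w x
    unfolding P_def using Gram_Schmidt_step[OF T(3), of w x] that T(6) sS by simp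
  have best: "norm (x - P x) \<le> norm (x - s)" if s: "s \<in> S" for x s
  proof -
    have "P x - s \<in> S" using PS s subspace_diff[OF S] by blast
    then have "orthogonal (x - P x) (P x - s)" using orth orthogonal_commute by blast
    then have "(norm ((x - P x) + (P x - s)))^2 = (norm (x - P x))^2 + (norm (P x - s))^2"
      by (rule norm_add_Pythagorean)
    then have "(norm (x - s))^2 \<ge> (norm (x - P x))^2" by simp
    then show ?thesis by (simp add: power2_le_iff_abs_le)
  qed
  show ?thesis using that lP PS best by blast
qed



lemma omega_add_left: "omega (x + y) z = omega x z + omega y z"
  by (simp add: omega_def inner_add_left)
lemma omega_add_right: "omega z (x + y) = omega z x + omega z y"
  by (simp add: omega_def inner_add_right)
lemma omega_scale_left: "omega (c *\<^sub>R x) z = c * omega x z"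
  by (simp add: omega_def algebra_simps)
lemma omega_scale_right: "omega z (c *\<^sub>R x) = c * omega z x"
  by (simp add: omega_def algebra_simps)
lemma omega_zero_left[simp]: "omega 0 z = 0"
  by (simp add: omega_def)
lemma omega_zero_right[simp]: "omega z 0 = 0"
  by (simp add: omega_def)
lemma omega_diff_right: "omega z (x - y) = omega z x - omega z y"
  by (simp add: omega_def inner_diff_right)
lemma omega_anti: "omega u v = - omega v u"
  by (simp add: omega_def inner_commute)

lemma linear_omega_right: "linear (omega b)"
  by (rule linearI) (simp_all add: omega_add_right omega_scale_right)
lemma linear_omega_left: "linear (\<lambda>x. omega x b)"
  by (rule linearI) (simp_all add: omega_add_left omega_scale_left)

definition Jm :: "'n::finite sympl \<Rightarrow> 'n sympl" where
  "Jm v = (snd v, - fst v)"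

lemma omega_Jm: "omega y v = y \<bullet> Jm v"
  by (cases y) (simp add: omega_def Jm_def inner_Pair)

lemma linear_Jm: "linear Jm"
  by (rule linearI) (simp_all add: Jm_def)

lemma inj_Jm: "inj Jm"
  by (rule injI) (simp add: Jm_def prod_eq_iff)

lemma lag_subspace: "L \<in> lagrangians \<Longrightarrow> subspace L"
  by (simp add: lagrangians_def)

lemma lag_max:
  fixes L :: "'n::finite sympl set"
  assumes L: "L \<in> lagrangians" and v: "\<forall>y\<in>L. omega y v = 0"
  shows "v \<in> L"
proof -
  have sL: "subspace L" and dL: "dim L = CARD('n)" and iso: "\<forall>u\<in>L. \<forall>w\<in>L. omega u w = 0"
    using L by (auto simp: lagrangians_def)
  define Lo where "Lo = {x\<in>UNIV. \<forall>b\<in>L. omega b x = 0}"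
  have sLo: "subspace Lo" unfolding Lo_def
    by (rule subspace_kernels[OF subspace_UNIV]) (simp add: linear_omega_right)
  define Ov where "Ov = {y \<in> UNIV. \<forall>x \<in> L. orthogonal x y}"
  have "dim Ov + dim L = dim (UNIV :: 'n sympl set)"
    unfolding Ov_def by (rule dim_subspace_orthogonal_to_vectors[OF sL subspace_UNIV subset_UNIV])
  then have dO: "dim Ov = CARD('n)" using dL by simp
  have "Jm ` Lo \<subseteq> Ov"
  proof
    fix z assume "z \<in> Jm ` Lo"
    then obtain x where x: "x \<in> Lo" "z = Jm x" by blast
    have "\<forall>y\<in>L. orthogonal y z"
      using x unfolding Lo_def orthogonal_def by (simp add: omega_Jm)
    then show "z \<in> Ov" unfolding Ov_def by blast
  qed
  then have "dim (Jm ` Lo) \<le> dim Ov" by (rule dim_subset)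
  moreover have "dim (Jm ` Lo) = dim Lo"
    by (rule dim_image_eq[OF linear_Jm]) (meson inj_Jm inj_on_subset subset_UNIV)
  ultimately have "dim Lo \<le> dim L" using dO dL by simp
  moreover have "L \<subseteq> Lo" unfolding Lo_def using iso by blast
  ultimately have "L = Lo" using subspace_dim_equal[OF sL sLo] by blast
  moreover have "v \<in> Lo" unfolding Lo_def using v by blast
  ultimately show ?thesis by simp
qed

definition Q3 :: "'n::finite sympl \<times> 'n sympl \<times> 'n sympl \<Rightarrow> real" where
  "Q3 = (\<lambda>(x1, x2, x3). omega x1 x2 + omega x2 x3 + omega x3 x1)"

definition B3 :: "'n::finite sympl \<times> 'n sympl \<times> 'n sympl \<Rightarrow> 'n sympl \<times> 'n sympl \<times> 'n sympl \<Rightarrow> real" where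
  "B3 x y = (omega (fst x) (fst (snd y)) + omega (fst y) (fst (snd x))
    + omega (fst (snd x)) (snd (snd y)) + omega (fst (snd y)) (snd (snd x))
    + omega (snd (snd x)) (fst y) + omega (snd (snd y)) (fst x)) / 2"

lemma beta_n_Q3: "beta_n L1 L2 L3 = signature Q3 (L1 \<times> L2 \<times> L3)"
  by (simp add: beta_n_def Q3_def)

lemma Q3_B3: "Q3 x = B3 x x"
  by (cases x) (simp add: Q3_def B3_def)

lemma B3_sym: "B3 x y = B3 y x"
  by (simp add: B3_def algebra_simps)

lemma bilinear_B3: "bilinear B3"
  unfolding bilinear_def
proof (intro conjI allI)
  fix x :: "'n::finite sympl \<times> 'n sympl \<times> 'n sympl"
  show "linear (B3 x)"
    by (rule linearI) (simp_all add: B3_def omega_add_left omega_add_right omega_scale_left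
        omega_scale_right algebra_simps add_divide_distrib)
  show "linear (\<lambda>y. B3 y x)"
    by (rule linearI) (simp_all add: B3_def omega_add_left omega_add_right omega_scale_left
        omega_scale_right algebra_simps add_divide_distrib)
qed

lemma bilinear_neg: "bilinear B \<Longrightarrow> bilinear (\<lambda>x y. - B x y)"
  by (simp add: bilinear_def linear_iff)

lemma transverse_0: "transverse L M \<Longrightarrow> x \<in> L \<Longrightarrow> x \<in> M \<Longrightarrow> x = 0"
  by (auto simp: transverse_def)

lemma B3_nondeg:
  fixes L1 L2 L3 :: "'n::finite sympl set"
  assumes L: "L1 \<in> lagrangians" "L2 \<in> lagrangians" "L3 \<in> lagrangians"
    and tr: "transverse L1 L2" "transverse L2 L3" "transverse L1 L3"
  shows "\<forall>w\<in>L1 \<times> L2 \<times> L3. (\<forall>x\<in>L1 \<times> L2 \<times> L3. B3 w x = 0) \<longrightarrow> w = 0"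
proof (intro ballI impI)
  fix w assume w: "w \<in> L1 \<times> L2 \<times> L3" and h: "\<forall>x\<in>L1 \<times> L2 \<times> L3. B3 w x = 0"
  obtain x1 x2 x3 where wx: "w = (x1, x2, x3)" by (cases w) auto
  have s1: "subspace L1" and s2: "subspace L2" and s3: "subspace L3"
    using L lag_subspace by auto
  have x1: "x1 \<in> L1" and x2: "x2 \<in> L2" and x3: "x3 \<in> L3" using w wx by auto
  have z1: "0 \<in> L1" and z2: "0 \<in> L2" and z3: "0 \<in> L3"
    using s1 s2 s3 subspace_0 by auto
  have a1: "x2 - x3 \<in> L1"
  proof (rule lag_max[OF L(1)], intro ballI)
    fix y assume y: "y \<in> L1"
    have "B3 w (y, 0, 0) = 0" using h y z2 z3 by auto
    then have "omega y x2 + omega x3 y = 0" using wx by (simp add: B3_def)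
    then show "omega y (x2 - x3) = 0" using omega_anti[of x3 y] by (simp add: omega_diff_right)
  qed
  have a2: "x3 - x1 \<in> L2"
  proof (rule lag_max[OF L(2)], intro ballI)
    fix y assume y: "y \<in> L2"
    have "B3 w (0, y, 0) = 0" using h y z1 z3 by auto
    then have "omega x1 y + omega y x3 = 0" using wx by (simp add: B3_def)
    then show "omega y (x3 - x1) = 0" using omega_anti[of x1 y] by (simp add: omega_diff_right)
  qed
  have a3: "x1 - x2 \<in> L3"
  proof (rule lag_max[OF L(3)], intro ballI)
    fix y assume y: "y \<in> L3"
    have "B3 w (0, 0, y) = 0" using h y z1 z2 by auto
    then have "omega x2 y + omega y x1 = 0" using wx by (simp add: B3_def)
    then show "omega y (x1 - x2) = 0" using omega_anti[of x2 y] by (simp add: omega_diff_right)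
  qed
  have p1: "x1 + (x2 - x3) \<in> L1" using x1 a1 subspace_add[OF s1] by blast
  have p2: "(x3 - x1) - x2 \<in> L2" using x2 a2 subspace_diff[OF s2] by blast
  then have "- ((x3 - x1) - x2) \<in> L2" using subspace_neg[OF s2] by blast
  moreover have "- ((x3 - x1) - x2) = x1 + (x2 - x3)" by (simp add: algebra_simps)
  ultimately have "x1 + (x2 - x3) \<in> L2" by metis
  then have "x1 + (x2 - x3) = 0" using transverse_0[OF tr(1) p1] by blast
  then have e3: "x3 = x1 + x2" by (simp add: algebra_simps)
  have "x3 + (x1 - x2) \<in> L3" using x3 a3 subspace_add[OF s3] by blast
  then have "(1/2) *\<^sub>R (x3 + (x1 - x2)) \<in> L3" using subspace_scale[OF s3] by blast
  moreover have "(1/2) *\<^sub>R (x3 + (x1 - x2)) = x1" using e3 by (simp add: algebra_simps flip: scaleR_add_left)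
  ultimately have "x1 \<in> L3" by simp
  then have x10: "x1 = 0" using transverse_0[OF tr(3) x1] by blast
  then have "- x2 \<in> L3" using a3 by simp
  then have "x2 \<in> L3" using subspace_neg[OF s3] by fastforce
  then have x20: "x2 = 0" using transverse_0[OF tr(2) x2] by blast
  show "w = 0" using wx x10 x20 e3 by (simp add: zero_prod_def)
qed


lemma gdist_proj:
  fixes L M :: "'n::finite sympl set"
  assumes sL: "subspace L" and sM: "subspace M" and lP: "linear P"
    and best: "\<And>x s. s \<in> M \<Longrightarrow> norm (x - P x) \<le> norm (x - s)"
    and g: "gdist M L < r"
    and x: "x \<in> L"
  shows "norm (P x - x) \<le> r * norm x"
proof (cases "x = 0")
  case True
  then show ?thesis using lP linear_0 by simp
next
  case False
  define v where "v = x /\<^sub>R norm x"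
  have vL: "v \<in> L" unfolding v_def using x subspace_scale[OF sL] by blast
  have nv: "norm v = 1" unfolding v_def using False by simp
  have vC: "v \<in> L \<inter> cball 0 1" using vL nv by simp
  have M0: "0 \<in> M" using subspace_0[OF sM] .
  have bdd: "bdd_above ((\<lambda>v. infdist v M) ` (L \<inter> cball 0 1))"
  proof (rule bdd_aboveI2)
    fix u assume "u \<in> L \<inter> cball 0 1"
    then have "norm u \<le> 1" by simp
    moreover have "infdist u M \<le> dist u 0" by (rule infdist_le[OF M0])
    ultimately show "infdist u M \<le> 1" by simp
  qed
  have "infdist v M \<le> (SUP u\<in>L \<inter> cball 0 1. infdist u M)"
    by (rule cSUP_upper[OF vC bdd])
  also have "\<dots> \<le> gdist M L" unfolding gdist_def by simp
  finally have "infdist v M < r" using g by simp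
  moreover have "norm (v - P v) \<le> infdist v M"
  proof -
    have "M \<noteq> {}" using M0 by blast
    then have "infdist v M = (INF s\<in>M. dist v s)" by (simp add: infdist_def)
    moreover have "norm (v - P v) \<le> (INF s\<in>M. dist v s)"
      by (rule cINF_greatest) (use M0 best in \<open>auto simp: dist_norm\<close>)
    ultimately show ?thesis by simp
  qed
  ultimately have nr: "norm (v - P v) \<le> r" by simp
  have "x = norm x *\<^sub>R v" unfolding v_def using False by simp
  then have "P x - x = norm x *\<^sub>R (P v - v)"
    using lP by (metis linear_cmul scaleR_right_diff_distrib)
  then have "norm (P x - x) = norm x * norm (v - P v)" by (simp add: norm_minus_commute)
  also have "\<dots> \<le> norm x * r" using nr by (simp add: mult_left_mono)
  finally show ?thesis by (simp add: mult.commute)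
qed

lemma norm_triple_sq:
  fixes a b c :: "'a::real_normed_vector"
  shows "(norm (a, b, c))^2 = (norm a)^2 + (norm b)^2 + (norm c)^2"
proof -
  have "(norm (b, c))^2 = (norm b)^2 + (norm c)^2" unfolding norm_Pair by simp
  moreover have "(norm (a, (b, c)))^2 = (norm a)^2 + (norm (b, c))^2" unfolding norm_Pair by simp
  ultimately show ?thesis by simp
qed

lemma dim_triple:
  fixes L1 L2 L3 :: "'n::finite sympl set"
  assumes "L1 \<in> lagrangians" "L2 \<in> lagrangians" "L3 \<in> lagrangians"
  shows "dim (L1 \<times> L2 \<times> L3) = 3 * CARD('n)" "subspace (L1 \<times> L2 \<times> L3)"
proof -
  have s: "subspace L1" "subspace L2" "subspace L3" using assms lag_subspace by auto
  have d: "dim L1 = CARD('n)" "dim L2 = CARD('n)" "dim L3 = CARD('n)"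
    using assms by (auto simp: lagrangians_def)
  have "subspace (L2 \<times> L3)" using s by (simp add: subspace_Times)
  then show "dim (L1 \<times> L2 \<times> L3) = 3 * CARD('n)"
    using s d by (simp add: dim_Times)
  show "subspace (L1 \<times> L2 \<times> L3)" using s by (simp add: subspace_Times)
qed

lemma betaN_stable:
  fixes L1 L2 L3 :: "'n::finite sympl set"
  assumes L: "L1 \<in> lagrangians" "L2 \<in> lagrangians" "L3 \<in> lagrangians"
    and tr: "transverse L1 L2" "transverse L2 L3" "transverse L1 L3"
  shows "\<exists>\<delta>>0. \<forall>M1 M2 M3. M1 \<in> lagrangians \<longrightarrow> M2 \<in> lagrangians \<longrightarrow> M3 \<in> lagrangians \<longrightarrow>
     gdist M1 L1 < \<delta> \<longrightarrow> gdist M2 L2 < \<delta> \<longrightarrow> gdist M3 L3 < \<delta> \<longrightarrow>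
     beta_n M1 M2 M3 = beta_n L1 L2 L3"
proof -
  define W where "W = L1 \<times> L2 \<times> L3"
  have sW: "subspace W" and dW: "dim W = 3 * CARD('n)" unfolding W_def using dim_triple[OF L] by auto
  have QB: "\<forall>x. Q3 x = B3 x x" by (simp add: Q3_B3)
  have QBn: "\<forall>x. - Q3 x = - B3 x x" by (simp add: Q3_B3)
  have lower: "dim W \<le> pos_index Q3 W + pos_index (\<lambda>u. - Q3 u) W"
    by (rule nondeg_pos_neg[OF bilinear_B3 _ QB sW]) (use B3_sym B3_nondeg[OF L tr] W_def in auto)
  obtain \<delta>1 where d1: "\<delta>1 > 0" "\<forall>W' T. subspace W' \<longrightarrow> linear T \<longrightarrow> T ` W \<subseteq> W' \<longrightarrow>
            (\<forall>x\<in>W. norm (T x - x) \<le> \<delta>1 * norm x) \<longrightarrow> pos_index Q3 W \<le> pos_index Q3 W'"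
    using pos_index_lsc[OF bilinear_B3 QB sW] by blast
  obtain \<delta>2 where d2: "\<delta>2 > 0" "\<forall>W' T. subspace W' \<longrightarrow> linear T \<longrightarrow> T ` W \<subseteq> W' \<longrightarrow>
            (\<forall>x\<in>W. norm (T x - x) \<le> \<delta>2 * norm x) \<longrightarrow> pos_index (\<lambda>u. - Q3 u) W \<le> pos_index (\<lambda>u. - Q3 u) W'"
    using pos_index_lsc[OF bilinear_neg[OF bilinear_B3] QBn sW] by blast
  define \<delta> where "\<delta> = min \<delta>1 \<delta>2"
  show ?thesis
  proof (intro exI[of _ \<delta>] conjI allI impI)
    show "\<delta> > 0" unfolding \<delta>_def using d1 d2 by simp
    fix M1 M2 M3 :: "'n sympl set"
    assume M: "M1 \<in> lagrangians" "M2 \<in> lagrangians" "M3 \<in> lagrangians"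
      and g: "gdist M1 L1 < \<delta>" "gdist M2 L2 < \<delta>" "gdist M3 L3 < \<delta>"
    define W' where "W' = M1 \<times> M2 \<times> M3"
    have sW': "subspace W'" and dW': "dim W' = 3 * CARD('n)" unfolding W'_def using dim_triple[OF M] by auto
    have sM: "subspace M1" "subspace M2" "subspace M3" using M lag_subspace by auto
    have sL: "subspace L1" "subspace L2" "subspace L3" using L lag_subspace by auto
    obtain P1 where P1: "linear P1" "\<And>x. P1 x \<in> M1" "\<And>x s. s \<in> M1 \<Longrightarrow> norm (x - P1 x) \<le> norm (x - s)"
      using proj_exists[OF sM(1)] by blast
    obtain P2 where P2: "linear P2" "\<And>x. P2 x \<in> M2" "\<And>x s. s \<in> M2 \<Longrightarrow> norm (x - P2 x) \<le> norm (x - s)"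
      using proj_exists[OF sM(2)] by blast
    obtain P3 where P3: "linear P3" "\<And>x. P3 x \<in> M3" "\<And>x s. s \<in> M3 \<Longrightarrow> norm (x - P3 x) \<le> norm (x - s)"
      using proj_exists[OF sM(3)] by blast
    define T where "T x = (P1 (fst x), P2 (fst (snd x)), P3 (snd (snd x)))" for x :: "'n sympl \<times> 'n sympl \<times> 'n sympl"
    have lT: "linear T"
      unfolding T_def
      by (rule linearI) (simp_all add: linear_add[OF P1(1)] linear_add[OF P2(1)] linear_add[OF P3(1)]
          linear_cmul[OF P1(1)] linear_cmul[OF P2(1)] linear_cmul[OF P3(1)])
    have TW: "T ` W \<subseteq> W'" unfolding W'_def T_def using P1(2) P2(2) P3(2) by auto
    have close: "norm (T x - x) \<le> \<delta> * norm x" if x: "x \<in> W" for x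
    proof -
      obtain x1 x2 x3 where xx: "x = (x1, x2, x3)" by (cases x) auto
      have xi: "x1 \<in> L1" "x2 \<in> L2" "x3 \<in> L3" using x xx W_def by auto
      have n1: "norm (P1 x1 - x1) \<le> \<delta> * norm x1"
        by (rule gdist_proj[OF sL(1) sM(1) P1(1) P1(3) g(1) xi(1)])
      have n2: "norm (P2 x2 - x2) \<le> \<delta> * norm x2"
        by (rule gdist_proj[OF sL(2) sM(2) P2(1) P2(3) g(2) xi(2)])
      have n3: "norm (P3 x3 - x3) \<le> \<delta> * norm x3"
        by (rule gdist_proj[OF sL(3) sM(3) P3(1) P3(3) g(3) xi(3)])
      have dpos: "\<delta> \<ge> 0" unfolding \<delta>_def using d1 d2 by simp
      have "(norm (T x - x))^2 = (norm (P1 x1 - x1))^2 + (norm (P2 x2 - x2))^2 + (norm (P3 x3 - x3))^2"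
        unfolding xx T_def by (simp add: norm_triple_sq)
      also have "\<dots> \<le> (\<delta> * norm x1)^2 + (\<delta> * norm x2)^2 + (\<delta> * norm x3)^2"
        using n1 n2 n3 by (intro add_mono power_mono) auto
      also have "\<dots> = (\<delta> * norm x)^2"
        unfolding xx power_mult_distrib norm_triple_sq by (simp add: distrib_left)
      finally have sq: "(norm (T x - x))^2 \<le> (\<delta> * norm x)^2" .
      have nn: "0 \<le> \<delta> * norm x" using dpos by simp
      show ?thesis by (rule power2_le_imp_le[OF sq nn])
    qed
    have c1: "\<forall>x\<in>W. norm (T x - x) \<le> \<delta>1 * norm x"
    proof
      fix x assume "x \<in> W"
      then have "norm (T x - x) \<le> \<delta> * norm x" by (rule close)
      also have "\<dots> \<le> \<delta>1 * norm x" unfolding \<delta>_def by (intro mult_right_mono) auto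
      finally show "norm (T x - x) \<le> \<delta>1 * norm x" .
    qed
    have c2: "\<forall>x\<in>W. norm (T x - x) \<le> \<delta>2 * norm x"
    proof
      fix x assume "x \<in> W"
      then have "norm (T x - x) \<le> \<delta> * norm x" by (rule close)
      also have "\<dots> \<le> \<delta>2 * norm x" unfolding \<delta>_def by (intro mult_right_mono) auto
      finally show "norm (T x - x) \<le> \<delta>2 * norm x" .
    qed
    have "pos_index Q3 W \<le> pos_index Q3 W'"
      by (rule d1(2)[rule_format, OF sW' lT TW c1[rule_format]])
    moreover have "pos_index (\<lambda>u. - Q3 u) W \<le> pos_index (\<lambda>u. - Q3 u) W'"
      by (rule d2(2)[rule_format, OF sW' lT TW c2[rule_format]])
    moreover have "pos_index Q3 W' + pos_index (\<lambda>u. - Q3 u) W' \<le> dim W'"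
      by (rule pos_neg_le[OF sW'])
    ultimately have "pos_index Q3 W = pos_index Q3 W'" "pos_index (\<lambda>u. - Q3 u) W = pos_index (\<lambda>u. - Q3 u) W'"
      using lower dW dW' by linarith+
    then show "beta_n M1 M2 M3 = beta_n L1 L2 L3"
      unfolding beta_n_Q3 signature_def W_def W'_def by simp
  qed
qed



definition Dor :: "complex \<Rightarrow> complex \<Rightarrow> complex \<Rightarrow> real" where
  "Dor x y z = Im (cnj x * y + cnj y * z + cnj z * x)"

lemma sin_identity:
  fixes u v :: real
  shows "sin u + sin v - sin (u + v) = 4 * sin (u/2) * sin (v/2) * sin ((u + v)/2)"
proof -
  define p where "p = u/2"
  define q where "q = v/2"
  have u: "u = 2 * p" and v: "v = 2 * q" unfolding p_def q_def by simp_all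
  have e1: "(sin p)^2 + (cos p)^2 = 1" and e2: "(sin q)^2 + (cos q)^2 = 1" by simp_all
  have "sin u + sin v - sin (u + v) = 2 * sin p * cos p + 2 * sin q * cos q
        - 2 * (sin p * cos q + cos p * sin q) * (cos p * cos q - sin p * sin q)"
  proof -
    have h1: "sin u = 2 * sin p * cos p" unfolding u by (rule sin_double)
    have h2: "sin v = 2 * sin q * cos q" unfolding v by (rule sin_double)
    have "u + v = 2 * (p + q)" unfolding u v by simp
    then have h3: "sin (u + v) = 2 * sin (p + q) * cos (p + q)" by (simp only: sin_double)
    show ?thesis by (simp only: h3 h1 h2) (simp add: sin_add cos_add)
  qed
  also have "\<dots> = 4 * sin p * sin q * (sin p * cos q + cos p * sin q)"
    using e1 e2 by algebra
  also have "\<dots> = 4 * sin (u/2) * sin (v/2) * sin ((u + v)/2)"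
    unfolding p_def q_def by (simp add: add_divide_distrib sin_add)
  finally show ?thesis .
qed

lemma Dor_cis: "Dor (cis a) (cis b) (cis c) = sin (b - a) + sin (c - b) + sin (a - c)"
  by (simp add: Dor_def cis_cnj cis_mult)

lemma pos_cyclic_Dor: "pos_cyclic x y z \<Longrightarrow> Dor x y z > 0"
proof -
  assume "pos_cyclic x y z"
  then obtain a b c where abc: "x = cis a" "y = cis b" "z = cis c" "a < b" "b < c" "c < a + 2 * pi"
    unfolding pos_cyclic_def by blast
  define u where "u = b - a"
  define v where "v = c - b"
  have "Dor x y z = sin u + sin v - sin (u + v)"
    unfolding abc Dor_cis u_def v_def
    by (smt (verit) sin_minus)
  also have "\<dots> = 4 * sin (u/2) * sin (v/2) * sin ((u + v)/2)" by (rule sin_identity)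
  also have "\<dots> > 0"
  proof -
    have "sin (u/2) > 0" using abc unfolding u_def v_def by (intro sin_gt_zero) auto
    moreover have "sin (v/2) > 0" using abc unfolding u_def v_def by (intro sin_gt_zero) auto
    moreover have "sin ((u+v)/2) > 0" using abc unfolding u_def v_def by (intro sin_gt_zero) auto
    ultimately show ?thesis by simp
  qed
  finally show ?thesis .
qed

lemma Dor_swap: "Dor x z y = - Dor x y z"
  by (simp add: Dor_def algebra_simps)

lemma circle_cis: "x \<in> circle \<Longrightarrow> x = cis (Arg x)"
proof -
  assume "x \<in> circle"
  then have n: "cmod x = 1" by (simp add: circle_def)
  then have "x \<noteq> 0" by auto
  then have "cis (Arg x) = sgn x" by (rule cis_Arg)
  also have "\<dots> = x" using n by (simp add: sgn_div_norm)
  finally show ?thesis by simp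
qed

lemma cis_normalize:
  fixes a b :: real
  obtains nb where "a \<le> nb" "nb < a + 2 * pi" "cis nb = cis b"
proof -
  define k where "k = \<lfloor>(b - a) / (2 * pi)\<rfloor>"
  have k1: "of_int k \<le> (b - a) / (2 * pi)" unfolding k_def by (rule of_int_floor_le)
  have k2: "(b - a) / (2 * pi) < of_int k + 1" unfolding k_def by (rule real_of_int_floor_add_one_gt)
  have pi0: "2 * pi > 0" by simp
  have "2 * pi * of_int k \<le> b - a" using k1 pi0 by (simp add: field_simps)
  moreover have "b - a < 2 * pi * of_int k + 2 * pi" using k2 pi0 by (simp add: field_simps)
  moreover have "cis (b - 2 * pi * of_int k) = cis b"
  proof -
    have h: "cis (2 * pi * of_int k) = 1" by (rule cis_multiple_2pi) simp
    have "cis b / cis (2 * pi * of_int k) = cis (b - 2 * pi * of_int k)" by (rule cis_divide)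
    then show ?thesis using h by simp
  qed
  ultimately show ?thesis using that[of "b - 2 * pi * of_int k"] by simp
qed

lemma circle_dichotomy:
  assumes "x \<in> circle" "y \<in> circle" "z \<in> circle" "x \<noteq> y" "y \<noteq> z" "x \<noteq> z"
  shows "pos_cyclic x y z \<or> pos_cyclic x z y"
proof -
  define a where "a = Arg x"
  have xa: "x = cis a" unfolding a_def by (rule circle_cis[OF assms(1)])
  obtain nb where nb: "a \<le> nb" "nb < a + 2 * pi" "cis nb = y"
    using cis_normalize[of a "Arg y"] circle_cis[OF assms(2)] by metis
  obtain nc where nc: "a \<le> nc" "nc < a + 2 * pi" "cis nc = z"
    using cis_normalize[of a "Arg z"] circle_cis[OF assms(3)] by metis
  have "nb \<noteq> a" using nb(3) xa assms(4) by auto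
  moreover have "nc \<noteq> a" using nc(3) xa assms(6) by auto
  moreover have "nb \<noteq> nc" using nb(3) nc(3) assms(5) by auto
  ultimately have "(a < nb \<and> nb < nc) \<or> (a < nc \<and> nc < nb)" using nb(1) nc(1) by linarith
  then show ?thesis
  proof
    assume "a < nb \<and> nb < nc"
    then have "pos_cyclic x y z" unfolding pos_cyclic_def using xa nb nc by blast
    then show ?thesis by blast
  next
    assume "a < nc \<and> nc < nb"
    then have "pos_cyclic x z y" unfolding pos_cyclic_def using xa nb nc by blast
    then show ?thesis by blast
  qed
qed

lemma beta1_sign:
  assumes "x \<in> circle" "y \<in> circle" "z \<in> circle" "x \<noteq> y" "y \<noteq> z" "x \<noteq> z"
  shows "(Dor x y z > 0 \<and> beta_1 x y z = 1) \<or> (Dor x y z < 0 \<and> beta_1 x y z = -1)"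
proof (cases "pos_cyclic x y z")
  case True
  then show ?thesis using pos_cyclic_Dor by (simp add: beta_1_def)
next
  case False
  then have "pos_cyclic x z y" using circle_dichotomy[OF assms] by blast
  then have "Dor x z y > 0" by (rule pos_cyclic_Dor)
  then show ?thesis using False \<open>pos_cyclic x z y\<close> Dor_swap[of x z y] by (simp add: beta_1_def)
qed

lemma Im_cnj_diff:
  assumes "cmod a = 1" "cmod b' = 1"
  shows "\<bar>Im (cnj a' * b') - Im (cnj a * b)\<bar> \<le> cmod (a' - a) + cmod (b' - b)"
proof -
  have "cnj a' * b' - cnj a * b = cnj (a' - a) * b' + cnj a * (b' - b)"
    by (simp add: algebra_simps)
  then have "cmod (cnj a' * b' - cnj a * b) \<le> cmod (cnj (a' - a) * b') + cmod (cnj a * (b' - b))"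
    by (metis norm_triangle_ineq)
  also have "\<dots> = cmod (a' - a) + cmod (b' - b)"
    using assms by (simp add: norm_mult flip: complex_cnj_diff)
  finally have "cmod (cnj a' * b' - cnj a * b) \<le> cmod (a' - a) + cmod (b' - b)" .
  moreover have "\<bar>Im (cnj a' * b' - cnj a * b)\<bar> \<le> cmod (cnj a' * b' - cnj a * b)"
    by (rule abs_Im_le_cmod)
  ultimately show ?thesis by simp
qed

lemma Dor_close:
  assumes "x \<in> circle" "y \<in> circle" "z \<in> circle" "x' \<in> circle" "y' \<in> circle" "z' \<in> circle"
  shows "\<bar>Dor x' y' z' - Dor x y z\<bar> \<le> 2 * (cmod (x' - x) + cmod (y' - y) + cmod (z' - z))"
proof -
  have n: "cmod x = 1" "cmod y = 1" "cmod z = 1" "cmod x' = 1" "cmod y' = 1" "cmod z' = 1"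
    using assms by (auto simp: circle_def)
  have "Dor x' y' z' - Dor x y z = (Im (cnj x' * y') - Im (cnj x * y)) + (Im (cnj y' * z') - Im (cnj y * z))
      + (Im (cnj z' * x') - Im (cnj z * x))"
    by (simp add: Dor_def)
  moreover have "\<bar>Im (cnj x' * y') - Im (cnj x * y)\<bar> \<le> cmod (x' - x) + cmod (y' - y)"
    by (rule Im_cnj_diff[OF n(1) n(5)])
  moreover have "\<bar>Im (cnj y' * z') - Im (cnj y * z)\<bar> \<le> cmod (y' - y) + cmod (z' - z)"
    by (rule Im_cnj_diff[OF n(2) n(6)])
  moreover have "\<bar>Im (cnj z' * x') - Im (cnj z * x)\<bar> \<le> cmod (z' - z) + cmod (x' - x)"
    by (rule Im_cnj_diff[OF n(3) n(4)])
  ultimately show ?thesis by (smt (verit))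
qed

lemma beta1_stable:
  assumes c: "x1 \<in> circle" "x2 \<in> circle" "x3 \<in> circle" and d: "x1 \<noteq> x2" "x2 \<noteq> x3" "x1 \<noteq> x3"
  shows "\<exists>r>0. \<forall>y1 y2 y3. y1 \<in> circle \<longrightarrow> y2 \<in> circle \<longrightarrow> y3 \<in> circle \<longrightarrow>
     dist y1 x1 < r \<longrightarrow> dist y2 x2 < r \<longrightarrow> dist y3 x3 < r \<longrightarrow> beta_1 y1 y2 y3 = beta_1 x1 x2 x3"
proof -
  define r where "r = min (\<bar>Dor x1 x2 x3\<bar> / 6) (min (dist x1 x2 / 2) (min (dist x2 x3 / 2) (dist x1 x3 / 2)))"
  have sgn: "(Dor x1 x2 x3 > 0 \<and> beta_1 x1 x2 x3 = 1) \<or> (Dor x1 x2 x3 < 0 \<and> beta_1 x1 x2 x3 = -1)"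
    by (rule beta1_sign[OF c d])
  have D0: "Dor x1 x2 x3 \<noteq> 0" using sgn by auto
  have r0: "r > 0" unfolding r_def using D0 d by simp
  show ?thesis
  proof (intro exI[of _ r] conjI allI impI)
    show "r > 0" by (rule r0)
    fix y1 y2 y3
    assume cy: "y1 \<in> circle" "y2 \<in> circle" "y3 \<in> circle"
      and dy: "dist y1 x1 < r" "dist y2 x2 < r" "dist y3 x3 < r"
    have "y1 \<noteq> y2"
    proof
      assume "y1 = y2"
      then have "dist x1 x2 \<le> dist y1 x1 + dist y2 x2" by (metis dist_commute dist_triangle)
      then show False using dy unfolding r_def by linarith
    qed
    moreover have "y2 \<noteq> y3"
    proof
      assume "y2 = y3"
      then have "dist x2 x3 \<le> dist y2 x2 + dist y3 x3" by (metis dist_commute dist_triangle)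
      then show False using dy unfolding r_def by linarith
    qed
    moreover have "y1 \<noteq> y3"
    proof
      assume "y1 = y3"
      then have "dist x1 x3 \<le> dist y1 x1 + dist y3 x3" by (metis dist_commute dist_triangle)
      then show False using dy unfolding r_def by linarith
    qed
    ultimately have sgny: "(Dor y1 y2 y3 > 0 \<and> beta_1 y1 y2 y3 = 1) \<or> (Dor y1 y2 y3 < 0 \<and> beta_1 y1 y2 y3 = -1)"
      using beta1_sign[OF cy] by blast
    have "\<bar>Dor y1 y2 y3 - Dor x1 x2 x3\<bar> \<le> 2 * (cmod (y1 - x1) + cmod (y2 - x2) + cmod (y3 - x3))"
      by (rule Dor_close[OF c cy])
    also have "\<dots> < 6 * r" using dy by (simp add: dist_norm)
    also have "\<dots> \<le> \<bar>Dor x1 x2 x3\<bar>" unfolding r_def by simp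
    finally have "\<bar>Dor y1 y2 y3 - Dor x1 x2 x3\<bar> < \<bar>Dor x1 x2 x3\<bar>" .
    then show "beta_1 y1 y2 y3 = beta_1 x1 x2 x3" using sgn sgny by auto
  qed
qed



lemma borel_inner:
  fixes A :: "'a::euclidean_space set"
  assumes "emeasure lebesgue A \<noteq> 0"
  obtains B where "B \<in> sets lborel" "B \<subseteq> A" "emeasure lborel B \<noteq> 0"
proof -
  have AS: "A \<in> sets lebesgue" using assms emeasure_notin_sets by blast
  define B where "B = main_part lborel A"
  have "B \<in> sets lborel" unfolding B_def using AS by (rule main_part_sets)
  moreover have "B \<subseteq> A" unfolding B_def using main_part_null_part_Un[OF AS] by blast
  moreover have "emeasure lborel B \<noteq> 0" unfolding B_def using assms emeasure_completion[OF AS] by simp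
  ultimately show ?thesis using that by blast
qed

lemma emeasure_Times_lborel:
  fixes A :: "'a::euclidean_space set" and B :: "'b::euclidean_space set"
  assumes "A \<in> sets lborel" "B \<in> sets lborel"
  shows "A \<times> B \<in> sets (lborel :: ('a \<times> 'b) measure)"
    "emeasure (lborel :: ('a \<times> 'b) measure) (A \<times> B) = emeasure lborel A * emeasure lborel B"
proof -
  have "A \<times> B \<in> sets (lborel \<Otimes>\<^sub>M lborel)" using assms by simp
  then show "A \<times> B \<in> sets (lborel :: ('a \<times> 'b) measure)" by (simp only: lborel_prod)
  have "emeasure (lborel \<Otimes>\<^sub>M lborel) (A \<times> B) = emeasure lborel A * emeasure lborel B"
    by (rule sigma_finite_measure.emeasure_pair_measure_Times[OF sigma_finite_lborel assms])
  then show "emeasure (lborel :: ('a \<times> 'b) measure) (A \<times> B) = emeasure lborel A * emeasure lborel B"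
    by (simp only: lborel_prod)
qed

lemma exists_triple:
  fixes P :: "real \<times> real \<times> real \<Rightarrow> bool" and A1 A2 A3 :: "real set"
  assumes ae: "AE p in lebesgue. P p"
    and m: "emeasure lebesgue A1 > 0" "emeasure lebesgue A2 > 0" "emeasure lebesgue A3 > 0"
  shows "\<exists>t1\<in>A1. \<exists>t2\<in>A2. \<exists>t3\<in>A3. P (t1, t2, t3)"
proof -
  obtain B1 where B1: "B1 \<in> sets lborel" "B1 \<subseteq> A1" "emeasure lborel B1 \<noteq> 0"
  proof -
    have "emeasure lebesgue A1 \<noteq> 0" using m(1) by simp
    then show ?thesis using borel_inner that by blast
  qed
  obtain B2 where B2: "B2 \<in> sets lborel" "B2 \<subseteq> A2" "emeasure lborel B2 \<noteq> 0"
  proof -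
    have "emeasure lebesgue A2 \<noteq> 0" using m(2) by simp
    then show ?thesis using borel_inner that by blast
  qed
  obtain B3 where B3: "B3 \<in> sets lborel" "B3 \<subseteq> A3" "emeasure lborel B3 \<noteq> 0"
  proof -
    have "emeasure lebesgue A3 \<noteq> 0" using m(3) by simp
    then show ?thesis using borel_inner that by blast
  qed
  have s23: "B2 \<times> B3 \<in> sets (lborel :: (real \<times> real) measure)"
    and e23: "emeasure (lborel :: (real \<times> real) measure) (B2 \<times> B3) = emeasure lborel B2 * emeasure lborel B3"
    using emeasure_Times_lborel[OF B2(1) B3(1)] by auto
  have s123: "B1 \<times> (B2 \<times> B3) \<in> sets (lborel :: (real \<times> real \<times> real) measure)"
    and e123: "emeasure (lborel :: (real \<times> real \<times> real) measure) (B1 \<times> (B2 \<times> B3))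
       = emeasure lborel B1 * emeasure (lborel :: (real \<times> real) measure) (B2 \<times> B3)"
    using emeasure_Times_lborel[OF B1(1) s23] by auto
  have pos: "emeasure (lborel :: (real \<times> real \<times> real) measure) (B1 \<times> (B2 \<times> B3)) \<noteq> 0"
    unfolding e123 e23 using B1(3) B2(3) B3(3) by simp
  have ae2: "AE p in lborel. P p" using ae by (simp add: AE_completion_iff)
  then obtain N where N: "{x \<in> space lborel. \<not> P x} \<subseteq> N" "emeasure lborel N = 0" "N \<in> sets lborel"
    by (rule AE_E)
  show ?thesis
  proof (rule ccontr)
    assume "\<not> ?thesis"
    then have "B1 \<times> (B2 \<times> B3) \<subseteq> N" using B1(2) B2(2) B3(2) N(1) by fastforce
    then have "emeasure lborel (B1 \<times> (B2 \<times> B3)) \<le> emeasure lborel N"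
      by (rule emeasure_mono[OF _ N(3)])
    then show False using pos N(2) by simp
  qed
qed


theorem lemma8p3:
  fixes \<Gamma> :: "(complex \<Rightarrow> complex) set"
    and \<rho> :: "(complex \<Rightarrow> complex) \<Rightarrow> ('n::finite sympl \<Rightarrow> 'n sympl)"
    and \<phi> :: "complex \<Rightarrow> 'n sympl set"
  assumes lattice: "torsion_free_cocompact_lattice \<Gamma>"
    and hom: "is_hom \<Gamma> \<rho>"
    and maps: "\<forall>x\<in>circle. \<phi> x \<in> lagrangians"
    and meas: "lag_measurable \<phi>"
    and equiv: "\<forall>g\<in>\<Gamma>. \<forall>x\<in>circle. \<phi> (g x) = \<rho> g ` \<phi> x"
    and cond_i: "AE p in (lebesgue :: (real \<times> real \<times> real) measure).
        beta_n (\<phi> (cis (fst p))) (\<phi> (cis (fst (snd p)))) (\<phi> (cis (snd (snd p))))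
          = int CARD('n) * beta_1 (cis (fst p)) (cis (fst (snd p))) (cis (snd (snd p)))"
    and cond_ii: "\<forall>L\<in>lagrangians. AE t in lebesgue. \<phi> (cis t) \<inter> L = {0}"
    and E1: "(x1, L1) \<in> essential_graph \<phi>"
    and E2: "(x2, L2) \<in> essential_graph \<phi>"
    and E3: "(x3, L3) \<in> essential_graph \<phi>"
    and distinct: "x1 \<noteq> x2" "x2 \<noteq> x3" "x1 \<noteq> x3"
    and transv: "transverse L1 L2" "transverse L2 L3" "transverse L1 L3"
  shows "beta_n L1 L2 L3 = int CARD('n) * beta_1 x1 x2 x3"
proof -
  have x1: "x1 \<in> circle" and L1: "L1 \<in> lagrangians"
    and m1: "\<forall>r>0. emeasure lebesgue {t \<in> {0..<2*pi}. dist (cis t) x1 < r \<and> gdist (\<phi> (cis t)) L1 < r} > 0"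
    using E1 unfolding essential_graph_def by auto
  have x2: "x2 \<in> circle" and L2: "L2 \<in> lagrangians"
    and m2: "\<forall>r>0. emeasure lebesgue {t \<in> {0..<2*pi}. dist (cis t) x2 < r \<and> gdist (\<phi> (cis t)) L2 < r} > 0"
    using E2 unfolding essential_graph_def by auto
  have x3: "x3 \<in> circle" and L3: "L3 \<in> lagrangians"
    and m3: "\<forall>r>0. emeasure lebesgue {t \<in> {0..<2*pi}. dist (cis t) x3 < r \<and> gdist (\<phi> (cis t)) L3 < r} > 0"
    using E3 unfolding essential_graph_def by auto
  obtain \<delta> where d: "\<delta> > 0" "\<forall>M1 M2 M3. M1 \<in> lagrangians \<longrightarrow> M2 \<in> lagrangians \<longrightarrow> M3 \<in> lagrangians \<longrightarrow>
     gdist M1 L1 < \<delta> \<longrightarrow> gdist M2 L2 < \<delta> \<longrightarrow> gdist M3 L3 < \<delta> \<longrightarrow>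
     beta_n M1 M2 M3 = beta_n L1 L2 L3"
    using betaN_stable[OF L1 L2 L3 transv] by blast
  obtain r1 where r1: "r1 > 0" "\<forall>y1 y2 y3. y1 \<in> circle \<longrightarrow> y2 \<in> circle \<longrightarrow> y3 \<in> circle \<longrightarrow>
     dist y1 x1 < r1 \<longrightarrow> dist y2 x2 < r1 \<longrightarrow> dist y3 x3 < r1 \<longrightarrow> beta_1 y1 y2 y3 = beta_1 x1 x2 x3"
    using beta1_stable[OF x1 x2 x3 distinct] by blast
  define r where "r = min \<delta> r1"
  have r0: "r > 0" unfolding r_def using d(1) r1(1) by simp
  define A1 where "A1 = {t \<in> {0..<2*pi}. dist (cis t) x1 < r \<and> gdist (\<phi> (cis t)) L1 < r}"
  define A2 where "A2 = {t \<in> {0..<2*pi}. dist (cis t) x2 < r \<and> gdist (\<phi> (cis t)) L2 < r}"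
  define A3 where "A3 = {t \<in> {0..<2*pi}. dist (cis t) x3 < r \<and> gdist (\<phi> (cis t)) L3 < r}"
  have "emeasure lebesgue A1 > 0" unfolding A1_def using m1 r0 by blast
  moreover have "emeasure lebesgue A2 > 0" unfolding A2_def using m2 r0 by blast
  moreover have "emeasure lebesgue A3 > 0" unfolding A3_def using m3 r0 by blast
  ultimately obtain t1 t2 t3 where t: "t1 \<in> A1" "t2 \<in> A2" "t3 \<in> A3"
    and eq: "beta_n (\<phi> (cis t1)) (\<phi> (cis t2)) (\<phi> (cis t3)) = int CARD('n) * beta_1 (cis t1) (cis t2) (cis t3)"
    using exists_triple[OF cond_i] by fastforce
  have cc: "cis t1 \<in> circle" "cis t2 \<in> circle" "cis t3 \<in> circle" by (simp_all add: circle_def)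
  have lg: "\<phi> (cis t1) \<in> lagrangians" "\<phi> (cis t2) \<in> lagrangians" "\<phi> (cis t3) \<in> lagrangians"
    using maps cc by auto
  have g: "gdist (\<phi> (cis t1)) L1 < \<delta>" "gdist (\<phi> (cis t2)) L2 < \<delta>" "gdist (\<phi> (cis t3)) L3 < \<delta>"
    using t unfolding A1_def A2_def A3_def r_def by auto
  have dd: "dist (cis t1) x1 < r1" "dist (cis t2) x2 < r1" "dist (cis t3) x3 < r1"
    using t unfolding A1_def A2_def A3_def r_def by auto
  have "beta_n L1 L2 L3 = beta_n (\<phi> (cis t1)) (\<phi> (cis t2)) (\<phi> (cis t3))"
    using d(2) lg g by simp
  also have "\<dots> = int CARD('n) * beta_1 (cis t1) (cis t2) (cis t3)" by (rule eq)
  also have "beta_1 (cis t1) (cis t2) (cis t3) = beta_1 x1 x2 x3"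
    using r1(2) cc dd by blast
  finally show ?thesis .
qed

end
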